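(* $\mathbf S(\mathbf{pAND}\cup\mathbf{11tAND}\cup\mathbf{11pOR}\cup\mathbf{tOR})\supsetneq\mathbf S(\mathbf{pAND}\cup\mathbf{11tAND}\cup\mathbf{tOR})$; in particular, there is a one-input one-output pOR net that does not belong to $\mathbf S(\mathbf{pAND}\cup\mathbf{11tAND}\cup\mathbf{tOR})$.
   Context: Petri nets: $(P,T,F)$ with finite disjoint places $P$, transitions $T$, flow edges $F\subseteq(P\times T)\cup(T\times P)$; $\bullet x=\{y\mid(y,x)\in F\}$, $x\bullet=\{y\mid(x,y)\in F\}$. Workflow nets. A pWF net is $(P,T,F,I,O)$ with $(P,T,F)$ a Petri net, $I,O\subseteq P$ non-empty, every node reachable by a directed path from some node of $I$, and some node of $O$ reachable from every node. A tWF net is the same with $I,O$ non-empty subsets of $T$. Input nodes may have incoming edges and output nodes outgoing edges. A WF net is a pWF or tWF net; it is one-input (one-output) if $|I|=1$ ($|O|=1$). Substitution. Let $N=(P,T,F,I,O)$ and $M=(P',T',F',I',O')$ be WF nets with disjoint node sets. If $p\in P$ and $M$ is a pWF net, $N\otimes_p M$ is obtained from $N$ by deleting $p$ and all edges incident to $p$, adding all nodes and edges of $M$, adding an edge $(t,p')$ for each $t\in\bullet_N p$ and each $p'\in I'$, and an edge $(p',t)$ for each $p'\in O'$ and each $t\in p\bullet_N$; its input set is $(I\setminus\{p\})\cup I'$ if $p\in I$ and $I$ otherwise, and its output set is $(O\setminus\{p\})\cup O'$ if $p\in O$ and $O$ otherwise. If $t\in T$ and $M$ is a tWF net, $N\otimes_t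 M$ is defined analogously: delete $t$ and its edges, add $M$, add $(q,t')$ for each $q\in\bullet_N t$, $t'\in I'$, and $(t',q)$ for each $t'\in O'$, $q\in t\bullet_N$, with input/output sets updated in the same way. The substitution closure $\mathbf S(C)$ of a class $C$ of WF nets is the smallest superclass of $C$ such that whenever $N,M\in\mathbf S(C)$ are disjoint, $N\otimes_p M\in\mathbf S(C)$ for every place $p$ of $N$ if $M$ is a pWF net, and $N\otimes_t M\in\mathbf S(C)$ for every transition $t$ of $N$ if $M$ is a tWF net. AND and OR nets. An AND net is an acyclic WF net $(P,T,F,I,O)$ such that for every place $p$: (1) either $p\in I$ and $|\bullet p|=0$, or $p\notin I$ and $|\bullet p|=1$; and (2) either $p\in O$ and $|p\bullet|=0$, or $p\notin O$ and $|p\bullet|=1$. An OR net is a (possibly cyclic) WF net such that for every transition $t$: (1) either $t\in I$ and $|\bullet t|=0$, or $t\notin I$ and $|\bullet t|=1$; and (2) either $t\in O$ and $|t\bullet|=0$, or $t\notin O$ and $|t\bullet|=1$. A pAND (tAND, pOR, tOR) net is an AND (AND, OR, OR) net that is a pWF (tWF, pWF, tWF) net. $\mathbf{pAND}$ is the class of pAND nets, $\mathbf{11tAND}$ the class of one-input one-output tAND nets, $\mathbf{11pOR}$ the class of one-input one-output pOR nets, and $\mathbf{tOR}$ the class of tOR nets. *)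

theory Defs
  imports Main
begin

record 'a net =
  pl  :: "'a set"
  tr  :: "'a set"
  fl  :: "('a \<times> 'a) set"
  inp :: "'a set"
  outp :: "'a set"

definition nodes :: "('a, 'b) net_scheme \<Rightarrow> 'a set" where
  "nodes N = pl N \<union> tr N"

definition pre :: "('a, 'b) net_scheme \<Rightarrow> 'a \<Rightarrow> 'a set" where
  "pre N x = {y. (y, x) \<in> fl N}"

definition post :: "('a, 'b) net_scheme \<Rightarrow> 'a \<Rightarrow> 'a set" where
  "post N x = {y. (x, y) \<in> fl N}"

definition petri_net :: "'a net \<Rightarrow> bool" where
  "petri_net N \<longleftrightarrow> finite (pl N) \<and> finite (tr N) \<and> pl N \<inter> tr N = {} \<and>
     fl N \<subseteq> (pl N \<times> tr N) \<union> (tr N \<times> pl N)"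

definition wf_conn :: "'a net \<Rightarrow> bool" where
  "wf_conn N \<longleftrightarrow> (\<forall>x\<in>nodes N. \<exists>i\<in>inp N. (i, x) \<in> (fl N)\<^sup>*) \<and>
                 (\<forall>x\<in>nodes N. \<exists>q\<in>outp N. (x, q) \<in> (fl N)\<^sup>*)"

definition pWF :: "'a net \<Rightarrow> bool" where
  "pWF N \<longleftrightarrow> petri_net N \<and> inp N \<subseteq> pl N \<and> outp N \<subseteq> pl N \<and>
     inp N \<noteq> {} \<and> outp N \<noteq> {} \<and> wf_conn N"

definition tWF :: "'a net \<Rightarrow> bool" where
  "tWF N \<longleftrightarrow> petri_net N \<and> inp N \<subseteq> tr N \<and> outp N \<subseteq> tr N \<and>
     inp N \<noteq> {} \<and> outp N \<noteq> {} \<and> wf_conn N"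

definition WF :: "'a net \<Rightarrow> bool" where
  "WF N \<longleftrightarrow> pWF N \<or> tWF N"

definition one_one :: "'a net \<Rightarrow> bool" where
  "one_one N \<longleftrightarrow> card (inp N) = 1 \<and> card (outp N) = 1"

definition subst :: "'a net \<Rightarrow> 'a \<Rightarrow> 'a net \<Rightarrow> 'a net" where
  "subst N x M =
    \<lparr> pl = (pl N - {x}) \<union> pl M,
      tr = (tr N - {x}) \<union> tr M,
      fl = {e \<in> fl N. fst e \<noteq> x \<and> snd e \<noteq> x} \<union> fl M
           \<union> {(y, z). y \<in> pre N x \<and> z \<in> inp M}
           \<union> {(z, y). z \<in> outp M \<and> y \<in> post N x},
      inp = (if x \<in> inp N then (inp N - {x}) \<union> inp M else inp N),
      outp = (if x \<in> outp N then (outp N - {x}) \<union> outp M else outp N) \<rparr>"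

inductive_set Scl :: "'a net set \<Rightarrow> 'a net set" for C :: "'a net set" where
  base: "N \<in> C \<Longrightarrow> N \<in> Scl C"
| subst_pl: "\<lbrakk> N \<in> Scl C; M \<in> Scl C; nodes N \<inter> nodes M = {}; pWF M; p \<in> pl N \<rbrakk>
             \<Longrightarrow> subst N p M \<in> Scl C"
| subst_tr: "\<lbrakk> N \<in> Scl C; M \<in> Scl C; nodes N \<inter> nodes M = {}; tWF M; t \<in> tr N \<rbrakk>
             \<Longrightarrow> subst N t M \<in> Scl C"

definition AND_net :: "'a net \<Rightarrow> bool" where
  "AND_net N \<longleftrightarrow> WF N \<and> acyclic (fl N) \<and>
     (\<forall>p\<in>pl N. ((p \<in> inp N \<and> card (pre N p) = 0) \<or> (p \<notin> inp N \<and> card (pre N p) = 1)) \<and>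
               ((p \<in> outp N \<and> card (post N p) = 0) \<or> (p \<notin> outp N \<and> card (post N p) = 1)))"

definition OR_net :: "'a net \<Rightarrow> bool" where
  "OR_net N \<longleftrightarrow> WF N \<and>
     (\<forall>t\<in>tr N. ((t \<in> inp N \<and> card (pre N t) = 0) \<or> (t \<notin> inp N \<and> card (pre N t) = 1)) \<and>
               ((t \<in> outp N \<and> card (post N t) = 0) \<or> (t \<notin> outp N \<and> card (post N t) = 1)))"

definition pAND :: "'a net set" where
  "pAND = {N. AND_net N \<and> pWF N}"

definition tAND11 :: "'a net set" where
  "tAND11 = {N. AND_net N \<and> tWF N \<and> one_one N}"

definition pOR11 :: "'a net set" where
  "pOR11 = {N. OR_net N \<and> pWF N \<and> one_one N}"

definition tOR :: "'a net set" where
  "tOR = {N. OR_net N \<and> tWF N}"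

end

theory Submission
  imports Defs
begin

definition Inv :: "'a net \<Rightarrow> bool" where
  "Inv N \<longleftrightarrow> pl N \<inter> tr N = {} \<and> fl N \<subseteq> pl N \<times> tr N \<union> tr N \<times> pl N \<and>
     inp N \<subseteq> nodes N \<and> (\<forall>p\<in>inp N \<inter> pl N. \<forall>y. (y, p) \<notin> fl N)"

lemma Scl_mono: "C \<subseteq> D \<Longrightarrow> Scl C \<subseteq> Scl D"
proof
  fix N assume CD: "C \<subseteq> D" and "N \<in> Scl C"
  from \<open>N \<in> Scl C\<close> show "N \<in> Scl D"
    by (induction rule: Scl.induct) (use CD in \<open>auto intro: Scl.intros\<close>)
qed

lemma Inv_subst:
  assumes A: "Inv A" and M: "Inv M" and dis: "nodes A \<inter> nodes M = {}"
    and kind: "(x \<in> pl A \<and> inp M \<subseteq> pl M \<and> outp M \<subseteq> pl M) \<or> (x \<in> tr A \<and> inp M \<subseteq> tr M \<and> outp M \<subseteq> tr M)"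
  shows "Inv (subst A x M)"
proof -
  let ?R = "subst A x M"
  from A have A1: "pl A \<inter> tr A = {}" and A2: "fl A \<subseteq> pl A \<times> tr A \<union> tr A \<times> pl A"
    and A3: "inp A \<subseteq> nodes A" and A4: "\<forall>p\<in>inp A \<inter> pl A. \<forall>y. (y, p) \<notin> fl A"
    unfolding Inv_def by auto
  from M have M1: "pl M \<inter> tr M = {}" and M2: "fl M \<subseteq> pl M \<times> tr M \<union> tr M \<times> pl M"
    and M3: "inp M \<subseteq> nodes M" and M4: "\<forall>p\<in>inp M \<inter> pl M. \<forall>y. (y, p) \<notin> fl M"
    unfolding Inv_def by auto
  have R1: "pl ?R \<inter> tr ?R = {}"
    using A1 M1 dis unfolding subst_def nodes_def by auto
  have R2: "fl ?R \<subseteq> pl ?R \<times> tr ?R \<union> tr ?R \<times> pl ?R"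
  proof
    fix e assume e: "e \<in> fl ?R"
    obtain a b where ab: "e = (a, b)" by (cases e)
    show "e \<in> pl ?R \<times> tr ?R \<union> tr ?R \<times> pl ?R"
      using e A1 A2 M2 kind M1 unfolding subst_def ab pre_def post_def by auto
  qed
  have R3: "inp ?R \<subseteq> nodes ?R"
    using A3 M3 unfolding subst_def nodes_def by auto
  have R4: "\<forall>p\<in>inp ?R \<inter> pl ?R. \<forall>y. (y, p) \<notin> fl ?R"
  proof (intro ballI allI notI)
    fix p y assume p: "p \<in> inp ?R \<inter> pl ?R" and e: "(y, p) \<in> fl ?R"
    have flA: "fl A \<subseteq> nodes A \<times> nodes A" using A2 unfolding nodes_def by auto
    have flM: "fl M \<subseteq> nodes M \<times> nodes M" using M2 unfolding nodes_def by auto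
    show False
    proof (cases "p \<in> inp A \<and> p \<noteq> x")
      case True
      then have pA: "p \<in> nodes A" using A3 by auto
      then have pnM: "p \<notin> nodes M" using dis by auto
      have "p \<in> pl A" using p pnM unfolding subst_def nodes_def by auto
      then show False using e True A4 pnM flM M3 unfolding subst_def post_def by auto
    next
      case False
      then have pM: "p \<in> inp M" and xA: "x \<in> inp A" using p unfolding subst_def
        by (auto split: if_splits)
      then have pM': "p \<in> nodes M" using M3 by auto
      then have pnA: "p \<notin> nodes A" using dis by auto
      have plM: "p \<in> pl M" using p pnA unfolding subst_def nodes_def by auto
      have "(y, p) \<in> fl M \<or> y \<in> pre A x"
        using e pnA flA unfolding subst_def post_def by auto
      then show False
      proof
        assume "(y, p) \<in> fl M" then show False using M4 pM plM by auto
      next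
        assume "y \<in> pre A x"
        then have "(y, x) \<in> fl A" unfolding pre_def by auto
        then show False using kind A4 xA plM pM M1 by auto
      qed
    qed
  qed
  show ?thesis unfolding Inv_def using R1 R2 R3 R4 by blast
qed

lemma finite_pre: "petri_net N \<Longrightarrow> finite (pre N p)"
  unfolding petri_net_def pre_def
  by (rule finite_subset[of _ "pl N \<union> tr N"]) auto

lemma Inv_base: "N \<in> pAND \<union> tAND11 \<union> tOR \<Longrightarrow> Inv N"
proof -
  assume N: "N \<in> pAND \<union> tAND11 \<union> tOR"
  then have WF: "pWF N \<or> tWF N"
    unfolding pAND_def tAND11_def tOR_def by auto
  then have pn: "petri_net N" and io: "inp N \<subseteq> nodes N"
    unfolding pWF_def tWF_def nodes_def by auto
  have key: "\<forall>p\<in>inp N \<inter> pl N. \<forall>y. (y, p) \<notin> fl N"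
  proof (intro ballI allI notI)
    fix p y assume p: "p \<in> inp N \<inter> pl N" and e: "(y, p) \<in> fl N"
    show False
    proof (cases "N \<in> pAND")
      case True
      then have "card (pre N p) = 0" using p unfolding pAND_def AND_net_def by auto
      then have "pre N p = {}" using finite_pre[OF pn] by auto
      then show False using e unfolding pre_def by auto
    next
      case False
      then have "tWF N" using N unfolding tAND11_def tOR_def by auto
      then show False using p unfolding tWF_def petri_net_def by auto
    qed
  qed
  show ?thesis unfolding Inv_def using pn io key unfolding petri_net_def by auto
qed

lemma Inv_Scl: "N \<in> Scl (pAND \<union> tAND11 \<union> tOR) \<Longrightarrow> Inv N"
proof (induction rule: Scl.induct)
  case (base N) then show ?case by (rule Inv_base)
next
  case (subst_pl N M p)
  then show ?case
    by (intro Inv_subst) (auto simp: pWF_def)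
next
  case (subst_tr N M t)
  then show ?case
    by (intro Inv_subst) (auto simp: tWF_def)
qed

definition N0 :: "nat net" where
  "N0 = \<lparr> pl = {0}, tr = {1}, fl = {(0,1),(1,0)}, inp = {0}, outp = {0} \<rparr>"

lemma N0_pOR: "N0 \<in> pOR11"
proof -
  have pre1: "pre N0 1 = {0}" unfolding pre_def N0_def by auto
  have post1: "post N0 1 = {0}" unfolding post_def N0_def by auto
  have pw: "pWF N0"
    unfolding pWF_def petri_net_def wf_conn_def N0_def nodes_def
    by (auto intro: r_into_rtrancl)
  show ?thesis
    unfolding pOR11_def OR_net_def WF_def one_one_def
    using pw pre1 post1 by (auto simp: N0_def)
qed

lemma N0_notin: "N0 \<notin> Scl (pAND \<union> tAND11 \<union> tOR)"
proof
  assume "N0 \<in> Scl (pAND \<union> tAND11 \<union> tOR)"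
  then have "Inv N0" by (rule Inv_Scl)
  then show False unfolding Inv_def N0_def by auto
qed

theorem mainTheorem3:
  shows "Scl (pAND \<union> tAND11 \<union> tOR) \<subset> Scl (pAND \<union> tAND11 \<union> pOR11 \<union> (tOR :: nat net set))
       \<and> (\<exists>N \<in> (pOR11 :: nat net set). N \<notin> Scl (pAND \<union> tAND11 \<union> tOR))"
proof -
  have sub: "Scl (pAND \<union> tAND11 \<union> tOR) \<subseteq> Scl (pAND \<union> tAND11 \<union> pOR11 \<union> (tOR :: nat net set))"
    by (rule Scl_mono) auto
  have "N0 \<in> Scl (pAND \<union> tAND11 \<union> pOR11 \<union> (tOR :: nat net set))"
    using N0_pOR by (auto intro: Scl.base)
  then show ?thesis using sub N0_notin N0_pOR by blast
qed

end
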